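(* Fix $\lambda>0$ and let $g(\lambda) = (1-e^{-\lambda})/\lambda$. Let $\mathbb P_p$ be the set of finite point-mass probability measures on $\mathbb R$, i.e. measures $\rho = \sum_{k=1}^n a_k\delta_{x_k}$ with $n \in \mathbb N$, $x_k \in \mathbb R$, $a_k \geqslant 0$, $\sum_k a_k = 1$, and let $N_p = \{\rho\in\mathbb P_p : \langle\rho,x\rangle = 0\}$, where $\langle\rho,x\rangle = \sum_k a_kx_k$. Define $A$ on $\mathbb P_p\setminus N_p$ by $$A(\rho) = \left(1 - g(\lambda) + g(\lambda)\frac{x}{\langle \rho, x\rangle}\right)\rho = \sum_k a_k\left(1 - g(\lambda) + g(\lambda)\frac{x_k}{\langle \rho, x\rangle}\right)\delta_{x_k}.$$ Equip $\mathbb P_p\setminus N_p$ and the target with the topology in which $\rho_n \to \rho$ iff $\int\phi\,d\rho_n \to \int\phi\,d\rho$ for every continuous compactly supported $\phi\colon\mathbb R\to\mathbb R$ (the subspace topology from the space of Radon measures / generalized functions on $C_c$ with the weak topology). Then $A$ is continuous at no point of $\mathbb P_p\setminus N_p$.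
   Context: $\delta_a$ denotes the Dirac measure at $a$; $\mathbb N$ includes $0$ but here $n\geqslant 1$ is implicit since $\rho$ is a probability measure. *)

theory Defs
  imports "HOL-Analysis.Analysis"
begin

text \<open>A finite (signed) point-mass measure on the reals is represented by its weight
  function w :: real => real with finite support; it stands for the measure
  sum over x with w x nonzero of w x times the Dirac measure at x.\<close>

definition fin_support :: "(real \<Rightarrow> real) \<Rightarrow> bool" where
  "fin_support w \<longleftrightarrow> finite {x. w x \<noteq> 0}"

definition pair :: "(real \<Rightarrow> real) \<Rightarrow> (real \<Rightarrow> real) \<Rightarrow> real" where
  "pair w \<phi> = (\<Sum>x\<in>{x. w x \<noteq> 0}. w x * \<phi> x)"

definition Pp :: "(real \<Rightarrow> real) set" where
  "Pp = {w. fin_support w \<and> (\<forall>x. w x \<ge> 0) \<and> pair w (\<lambda>_. 1) = 1}"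

definition Np :: "(real \<Rightarrow> real) set" where
  "Np = {w \<in> Pp. pair w (\<lambda>x. x) = 0}"

definition Cc :: "(real \<Rightarrow> real) set" where
  "Cc = {\<phi>. continuous_on UNIV \<phi> \<and> compact (closure {x. \<phi> x \<noteq> 0})}"

definition gfun :: "real \<Rightarrow> real" where
  "gfun l = (1 - exp (- l)) / l"

definition Aop :: "real \<Rightarrow> (real \<Rightarrow> real) \<Rightarrow> (real \<Rightarrow> real)" where
  "Aop l w = (\<lambda>x. w x * (1 - gfun l + gfun l * x / pair w (\<lambda>y. y)))"

definition weak_top :: "(real \<Rightarrow> real) topology" where
  "weak_top = topology_generated_by
     {{w. pair w \<phi> \<in> U} | \<phi> U. \<phi> \<in> Cc \<and> open U}"

end

theory Submission
  imports Defs
begin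

lemma pair_superset:
  assumes "finite F" "{x. w x \<noteq> 0} \<subseteq> F"
  shows "pair w \<psi> = (\<Sum>x\<in>F. w x * \<psi> x)"
  unfolding pair_def by (rule sum.mono_neutral_left) (use assms in auto)

lemma pair_mult:
  assumes "fin_support w"
  shows "pair (\<lambda>x. w x * h x) \<psi> = pair w (\<lambda>x. h x * \<psi> x)"
proof -
  have f: "finite {x. w x \<noteq> 0}" using assms by (simp add: fin_support_def)
  have "pair (\<lambda>x. w x * h x) \<psi> = (\<Sum>x\<in>{x. w x \<noteq> 0}. w x * h x * \<psi> x)"
    by (rule pair_superset) (use f in auto)
  also have "\<dots> = pair w (\<lambda>x. h x * \<psi> x)"
    unfolding pair_def by (simp add: mult.assoc)
  finally show ?thesis .
qed

lemma pair_cong: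
  assumes "\<And>x. w x \<noteq> 0 \<Longrightarrow> f x = h x"
  shows "pair w f = pair w h"
  unfolding pair_def by (rule sum.cong) (use assms in auto)

lemma pair_lin:
  "pair w (\<lambda>x. a * f x + b * h x) = a * pair w f + b * pair w h"
  unfolding pair_def by (simp add: sum.distrib sum_distrib_left algebra_simps)

lemma pair_pert:
  assumes "fin_support w" "w y = 0"
  shows "pair (\<lambda>x. a * w x + (if x = y then e else 0)) \<psi> = a * pair w \<psi> + e * \<psi> y"
proof -
  let ?S = "{x. w x \<noteq> 0}"
  have f: "finite ?S" using assms by (simp add: fin_support_def)
  have yS: "y \<notin> ?S" using assms by simp
  have "pair (\<lambda>x. a * w x + (if x = y then e else 0)) \<psi>
      = (\<Sum>x\<in>insert y ?S. (a * w x + (if x = y then e else 0)) * \<psi> x)"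
    by (rule pair_superset) (use f in auto)
  also have "\<dots> = (a * w y + e) * \<psi> y + (\<Sum>x\<in>?S. (a * w x + (if x = y then e else 0)) * \<psi> x)"
    using f yS by (simp add: sum.insert)
  also have "(\<Sum>x\<in>?S. (a * w x + (if x = y then e else 0)) * \<psi> x) = (\<Sum>x\<in>?S. a * (w x * \<psi> x))"
    by (rule sum.cong) (use yS in auto)
  finally show ?thesis using assms unfolding pair_def by (simp add: sum_distrib_left algebra_simps)
qed

lemma pert_fin:
  assumes "fin_support w"
  shows "fin_support (\<lambda>x. a * w x + (if x = y then e else 0))"
proof -
  have "{x. a * w x + (if x = y then e else 0) \<noteq> 0} \<subseteq> insert y {x. w x \<noteq> 0}" by auto
  then show ?thesis using assms unfolding fin_support_def by (meson finite_insert finite_subset)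
qed

lemma gen_open_eventually:
  assumes "generate_topology_on B S"
    and B: "B = {{w. pair w \<phi> \<in> U} | \<phi> U. \<phi> \<in> Cc \<and> open U}"
    and conv: "\<And>\<phi>. \<phi> \<in> Cc \<Longrightarrow> (\<lambda>n. pair (r n) \<phi>) \<longlonglongrightarrow> pair \<rho> \<phi>"
  shows "\<rho> \<in> S \<Longrightarrow> eventually (\<lambda>n. r n \<in> S) sequentially"
  using assms(1)
proof (induction rule: generate_topology_on.induct)
  case Empty then show ?case by simp
next
  case (Int a b) then show ?case by (auto intro: eventually_conj)
next
  case (UN K)
  then obtain k where "k \<in> K" "\<rho> \<in> k" by auto
  with UN have "eventually (\<lambda>n. r n \<in> k) sequentially" by auto
  then show ?case by eventually_elim (use \<open>k \<in> K\<close> in auto)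
next
  case (Basis s)
  then obtain \<phi> U where s: "s = {w. pair w \<phi> \<in> U}" "\<phi> \<in> Cc" "open U" using B by auto
  have "eventually (\<lambda>n. pair (r n) \<phi> \<in> U) sequentially"
    using topological_tendstoD[OF conv[OF s(2)] s(3)] Basis s by auto
  then show ?case using s by simp
qed


lemma Cc_far:
  assumes "\<phi> \<in> Cc"
  shows "\<exists>K. \<forall>x. \<bar>x\<bar> > K \<longrightarrow> \<phi> x = 0"
proof -
  have "compact (closure {x. \<phi> x \<noteq> 0})"
    using assms unfolding Cc_def by simp
  then have "bounded (closure {x. \<phi> x \<noteq> 0})"
    by (rule compact_imp_bounded)
  then obtain K where K: "\<forall>x\<in>closure {x. \<phi> x \<noteq> 0}. norm x \<le> K"
    unfolding bounded_iff by (elim exE)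
  have H: "\<phi> x = 0" if "\<bar>x\<bar> > K" for x
  proof (rule ccontr)
    assume "\<phi> x \<noteq> 0"
    then have "x \<in> {x. \<phi> x \<noteq> 0}" by simp
    then have "x \<in> closure {x. \<phi> x \<noteq> 0}" by (rule closure_subset[THEN subsetD])
    then have "norm x \<le> K" by (rule bspec[OF K])
    with that show False by simp
  qed
  show ?thesis
  proof (intro exI[of _ K] allI impI)
    fix x :: real assume "\<bar>x\<bar> > K" then show "\<phi> x = 0" by (rule H)
  qed
qed

theorem proposition1:
  fixes l :: real and \<rho> :: "real \<Rightarrow> real"
  assumes "l > 0" and "\<rho> \<in> Pp - Np"
  shows "\<not> limitin weak_top (Aop l) (Aop l \<rho>) (atin (subtopology weak_top (Pp - Np)) \<rho>)"
proof
  assume lim: "limitin weak_top (Aop l) (Aop l \<rho>) (atin (subtopology weak_top (Pp - Np)) \<rho>)"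
  define g where "g = gfun l"
  have gpos: "g > 0" using \<open>l > 0\<close> unfolding g_def gfun_def by (simp add: divide_pos_pos)
  have gle: "g \<le> 1"
  proof -
    have "1 + (- l) \<le> exp (- l)" by (rule exp_ge_add_one_self)
    then show ?thesis using \<open>l > 0\<close> unfolding g_def gfun_def by (simp add: divide_le_eq)
  qed
  define S0 where "S0 = {x. \<rho> x \<noteq> 0}"
  have finr: "fin_support \<rho>" and nonneg: "\<And>x. \<rho> x \<ge> 0" and tot: "pair \<rho> (\<lambda>_. 1) = 1"
    using assms(2) unfolding Pp_def by auto
  define m where "m = pair \<rho> (\<lambda>x. x)"
  have m0: "m \<noteq> 0" using assms(2) unfolding Np_def m_def by auto
  have finS0: "finite S0" using finr unfolding fin_support_def S0_def by simp
  define R where "R = (\<Sum>x\<in>S0. \<bar>x\<bar>)"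
  have R: "\<And>x. x \<in> S0 \<Longrightarrow> \<bar>x\<bar> \<le> R"
    unfolding R_def using finS0 by (intro member_le_sum) auto
  have R0: "R \<ge> 0" unfolding R_def by (simp add: sum_nonneg)
  define \<phi> where "\<phi> = (\<lambda>x::real. max 0 (min 1 (R + 2 - \<bar>x\<bar>)))"
  have \<phi>1: "\<And>x. x \<in> S0 \<Longrightarrow> \<phi> x = 1" using R unfolding \<phi>_def by force
  have \<phi>0: "\<And>x. \<bar>x\<bar> \<ge> R + 2 \<Longrightarrow> \<phi> x = 0" unfolding \<phi>_def by auto
  have \<phi>Cc: "\<phi> \<in> Cc"
  proof -
    have c: "continuous_on UNIV \<phi>" unfolding \<phi>_def by (intro continuous_intros)
    have "{x. \<phi> x \<noteq> 0} \<subseteq> cball 0 (R + 2)"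
      using \<phi>0 by (force simp: dist_real_def)
    then have "closure {x. \<phi> x \<noteq> 0} \<subseteq> cball 0 (R + 2)"
      by (simp add: closure_minimal)
    then have "compact (closure {x. \<phi> x \<noteq> 0})"
      by (meson bounded_cball bounded_subset closed_closure compact_eq_bounded_closed)
    with c show ?thesis unfolding Cc_def by simp
  qed
  define t where "t = (\<lambda>n::nat. 2 * \<bar>m\<bar> + R + 3 + real n)"
  define e where "e = (\<lambda>n. \<bar>m\<bar> / t n)"
  define y where "y = (\<lambda>n. m * t n / \<bar>m\<bar>)"
  define r where "r = (\<lambda>n x. (1 - e n) * \<rho> x + (if x = y n then e n else 0))"
  have tpos: "\<And>n. t n > 0" unfolding t_def using R0 by (simp add: add_pos_nonneg)
  have epos: "\<And>n. e n > 0" unfolding e_def using tpos m0 by simp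
  have ehalf: "\<And>n. e n \<le> 1/2"
    unfolding e_def using tpos R0 by (simp add: divide_le_eq t_def)
  have ey: "e n * y n = m" for n unfolding e_def y_def using tpos[of n] m0 by (simp add: field_simps)
  have yabs: "\<bar>y n\<bar> = t n" for n unfolding y_def using tpos[of n] m0 by (simp add: abs_mult)
  have ybig: "\<And>n. \<bar>y n\<bar> \<ge> R + 2" "\<And>n. \<bar>y n\<bar> \<ge> real n" using yabs R0 m0 unfolding t_def by auto
  have yS0: "\<rho> (y n) = 0" for n
  proof (rule ccontr)
    assume "\<rho> (y n) \<noteq> 0"
    then have "\<bar>y n\<bar> \<le> R" using R unfolding S0_def by blast
    then show False using ybig(1)[of n] by linarith
  qed
  have pr: "\<And>n \<psi>. pair (r n) \<psi> = (1 - e n) * pair \<rho> \<psi> + e n * \<psi> (y n)"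
    unfolding r_def using finr yS0 by (rule pair_pert)
  have finrn: "\<And>n. fin_support (r n)" unfolding r_def using finr by (rule pert_fin)
  have e_lim: "e \<longlonglongrightarrow> 0"
  proof -
    have "filterlim (\<lambda>n. (2 * \<bar>m\<bar> + R + 3) + real n) at_top sequentially"
      by (rule filterlim_tendsto_add_at_top[OF tendsto_const filterlim_real_sequentially])
    then have "filterlim t at_infinity sequentially"
      unfolding t_def by (rule filterlim_at_top_imp_at_infinity)
    then have "(\<lambda>n. \<bar>m\<bar> / t n) \<longlonglongrightarrow> 0"
      by (rule tendsto_divide_0[OF tendsto_const])
    then show ?thesis unfolding e_def .
  qed
  have conv: "(\<lambda>n. pair (r n) \<psi>) \<longlonglongrightarrow> pair \<rho> \<psi>" if \<psi>Cc: "\<psi> \<in> Cc" for \<psi>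
  proof -
    obtain K where K: "\<And>x. \<bar>x\<bar> > K \<Longrightarrow> \<psi> x = 0" using Cc_far[OF \<psi>Cc] by blast
    have ev: "eventually (\<lambda>n. (1 - e n) * pair \<rho> \<psi> = pair (r n) \<psi>) sequentially"
    proof -
      obtain N :: nat where N: "real N > K" using reals_Archimedean2 by blast
      have "eventually (\<lambda>n. real n > K) sequentially"
        unfolding eventually_sequentially
        by (rule exI[of _ N]) (use N in auto)
      then show ?thesis
      proof eventually_elim
        case (elim n)
        have "\<psi> (y n) = 0" using elim ybig(2)[of n] by (intro K) linarith
        then show ?case using pr[of n \<psi>] by simp
      qed
    qed
    have "(\<lambda>n. (1 - e n) * pair \<rho> \<psi>) \<longlonglongrightarrow> (1 - 0) * pair \<rho> \<psi>"
      by (intro tendsto_intros e_lim)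
    then show ?thesis using Lim_transform_eventually[OF _ ev] by simp
  qed
  have topsp: "topspace weak_top = UNIV"
  proof -
    have z: "(\<lambda>_::real. 0::real) \<in> Cc"
      unfolding Cc_def by simp
    have "UNIV \<in> {{w. pair w \<phi> \<in> U} | \<phi> U. \<phi> \<in> Cc \<and> open U}"
      by (intro CollectI exI[of _ "\<lambda>_. 0"] exI[of _ UNIV]) (simp add: z)
    then have "UNIV \<subseteq> \<Union>{{w. pair w \<phi> \<in> U} | \<phi> U. \<phi> \<in> Cc \<and> open U}"
      by (rule Union_upper)
    then show ?thesis unfolding weak_top_def topology_generated_by_topspace
      by (rule subset_antisym[OF subset_UNIV])
  qed
  define U where "U = {w. pair w \<phi> \<in> ball 1 (g/3)}"
  have Uopen: "openin weak_top U"
    unfolding weak_top_def U_def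
    by (rule topology_generated_by_Basis) (use \<phi>Cc in \<open>blast intro: open_ball\<close>)
  have pA: "pair (Aop l w) \<phi> = pair w (\<lambda>x. (1 - g + g * x / pair w (\<lambda>y. y)) * \<phi> x)"
    if "fin_support w" for w
    unfolding Aop_def g_def by (rule pair_mult[OF that])
  have Arho: "pair (Aop l \<rho>) \<phi> = 1"
  proof -
    have "pair (Aop l \<rho>) \<phi> = pair \<rho> (\<lambda>x. (1 - g) * 1 + (g / m) * x)"
      unfolding pA[OF finr] m_def[symmetric]
      by (rule pair_cong) (simp add: \<phi>1 S0_def)
    also have "\<dots> = (1 - g) + g" unfolding pair_lin tot m_def[symmetric] using m0 by simp
    finally show ?thesis by simp
  qed
  have AU: "Aop l \<rho> \<in> U" unfolding U_def using Arho gpos by simp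
  have "eventually (\<lambda>w. Aop l w \<in> U) (atin (subtopology weak_top (Pp - Np)) \<rho>)"
    using lim Uopen AU unfolding limitin_def by blast
  moreover have tsp: "\<rho> \<in> topspace (subtopology weak_top (Pp - Np))"
    using assms(2) topsp by simp
  ultimately have "\<exists>T. openin (subtopology weak_top (Pp - Np)) T \<and> \<rho> \<in> T \<and>
      (\<forall>w\<in>T - {\<rho>}. Aop l w \<in> U)"
    unfolding eventually_atin by blast
  then obtain T where T: "openin (subtopology weak_top (Pp - Np)) T" "\<rho> \<in> T"
      "\<And>w. w \<in> T - {\<rho>} \<Longrightarrow> Aop l w \<in> U"
    by blast
  from T(1) obtain T' where T': "openin weak_top T'" "T = T' \<inter> (Pp - Np)"
    unfolding openin_subtopology by blast
  have gT: "generate_topology_on {{w. pair w \<phi> \<in> U} | \<phi> U. \<phi> \<in> Cc \<and> open U} T'"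
    using T'(1) unfolding weak_top_def openin_topology_generated_by_iff .
  have rhoT: "\<rho> \<in> T'" using T(2) T'(2) by blast
  have "eventually (\<lambda>n. r n \<in> T') sequentially"
    by (rule gen_open_eventually[where r=r and \<rho>=\<rho> and S=T', OF gT refl conv rhoT])
  then obtain N where N: "\<And>k. k \<ge> N \<Longrightarrow> r k \<in> T'" unfolding eventually_sequentially by blast
  define n where "n = N"
  have n: "r n \<in> T'" unfolding n_def by (rule N) simp
  have mr: "pair (r n) (\<lambda>x. x) = (2 - e n) * m"
    using pr[of n "\<lambda>x. x"] ey[of n] by (simp add: m_def[symmetric] algebra_simps)
  have rPp: "r n \<in> Pp"
  proof -
    have "r n x \<ge> 0" for x using nonneg[of x] epos[of n] ehalf[of n] unfolding r_def by simp
    moreover have "pair (r n) (\<lambda>_. 1) = 1" using pr[of n "\<lambda>_. 1"] tot by simp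
    ultimately show ?thesis using finrn unfolding Pp_def by auto
  qed
  have rNp: "r n \<notin> Np" using mr m0 ehalf[of n] unfolding Np_def by auto
  have rne: "r n \<noteq> \<rho>"
  proof
    assume "r n = \<rho>"
    then have "r n (y n) = \<rho> (y n)" by simp
    then show False using yS0[of n] epos[of n] unfolding r_def by simp
  qed
  have "r n \<in> T - {\<rho>}" using n T'(2) rPp rNp rne by blast
  then have "Aop l (r n) \<in> U" by (rule T(3))
  then have close: "\<bar>pair (Aop l (r n)) \<phi> - 1\<bar> < g/3"
    unfolding U_def by (simp add: dist_real_def abs_minus_commute)
  have val: "pair (Aop l (r n)) \<phi> = (1 - e n) * ((1 - g) + g / (2 - e n))"
  proof -
    have "pair (Aop l (r n)) \<phi> = pair (r n) (\<lambda>x. (1 - g + g * x / ((2 - e n) * m)) * \<phi> x)"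
      unfolding pA[OF finrn] mr ..
    also have "\<dots> = (1 - e n) * pair \<rho> (\<lambda>x. (1 - g + g * x / ((2 - e n) * m)) * \<phi> x)"
      using pr \<phi>0[OF ybig(1)[of n]] by simp
    also have "pair \<rho> (\<lambda>x. (1 - g + g * x / ((2 - e n) * m)) * \<phi> x)
        = pair \<rho> (\<lambda>x. (1 - g) * 1 + (g / ((2 - e n) * m)) * x)"
      by (rule pair_cong) (simp add: \<phi>1 S0_def)
    also have "\<dots> = (1 - g) + g / (2 - e n)"
      unfolding pair_lin tot m_def[symmetric] using m0 by simp
    finally show ?thesis .
  qed
  have X0: "(1 - g) + g / (2 - e n) \<ge> 0" using gle gpos ehalf[of n] epos[of n]
    by (simp add: add_nonneg_nonneg)
  have "g / (2 - e n) \<le> g / (3/2)" using gpos ehalf[of n]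
    by (intro divide_left_mono) auto
  moreover have "g / (3/2) = 2 * g / 3" by simp
  ultimately have q: "g / (2 - e n) \<le> 2 * g / 3" by (rule ord_le_eq_trans)
  have "(1 - g) + g / (2 - e n) \<le> (1 - g) + 2 * g / 3" using q by (rule add_left_mono)
  also have "(1 - g) + 2 * g / 3 = 1 - g/3" by simp
  finally have X1: "(1 - g) + g / (2 - e n) \<le> 1 - g/3" .
  have X2: "(1 - e n) * ((1 - g) + g / (2 - e n)) \<le> (1 - g) + g / (2 - e n)"
    by (rule mult_left_le_one_le) (use X0 epos[of n] ehalf[of n] in auto)
  have "pair (Aop l (r n)) \<phi> \<le> 1 - g/3" using X1 X2 val by linarith
  moreover have "1 - g/3 < pair (Aop l (r n)) \<phi>" 
  proof -
    have "- (pair (Aop l (r n)) \<phi> - 1) \<le> \<bar>pair (Aop l (r n)) \<phi> - 1\<bar>"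
      by (rule abs_ge_minus_self)
    then show ?thesis using close by linarith
  qed
  ultimately show False by linarith
qed

end
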